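(* Fix an integer $r\ge 1$. Let $A=(a_{ij})$ be a real symmetric $n\times n$ matrix with $n\ge r$, with eigenvalues $\lambda_1\ge \lambda_2\ge\cdots\ge\lambda_n$, such that $0\le a_{ij}\le 1$ for all $i\neq j$ and $a_{ii}\ge 0$ for all $1\le i\le n$. Then \[ \lambda_{n-r+1}+\lambda_{n-r+2}+\cdots+\lambda_n\ \ge\ -\frac{\beta_r}{2}\,n . \]
   Context: For integers $N\ge r\ge 1$, let $\mathcal P_r(N)=\{Q\in\mathbb R^{N\times N}: Q^2=Q,\ Q^T=Q,\ \operatorname{rank}Q=r\}$ be the set of rank-$r$ orthogonal projections. Define \[ \beta_r(N)=\frac1N\max_{Q\in\mathcal P_r(N)}\sum_{i,j=1}^N |q_{ij}|,\qquad \beta_r=\sup_{N\ge r}\beta_r(N), \] where $Q=(q_{ij})$. *)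

theory Defs
  imports "Jordan_Normal_Form.DL_Rank" "Jordan_Normal_Form.Char_Poly"
begin

definition proj_set :: "nat \<Rightarrow> nat \<Rightarrow> real mat set" where
  "proj_set r N = {Q. Q \<in> carrier_mat N N \<and> Q * Q = Q \<and> transpose_mat Q = Q
                      \<and> vec_space.rank N Q = r}"

definition beta_N :: "nat \<Rightarrow> nat \<Rightarrow> real" where
  "beta_N r N = (1 / real N) *
     Sup ((\<lambda>Q. \<Sum>i<N. \<Sum>j<N. \<bar>Q $$ (i, j)\<bar>) ` proj_set r N)"

definition beta :: "nat \<Rightarrow> real" where
  "beta r = Sup (beta_N r ` {N. N \<ge> r})"

end

theory Submission
  imports Defs Jordan_Normal_Form.Schur_Decomposition
begin



lemma conj_real_vec[simp]: "conjugate (v :: real vec) = v"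
  by (rule eq_vecI, auto simp: conjugate_vec_def)

definition diag_of :: "nat \<Rightarrow> real list \<Rightarrow> real mat" where
 "diag_of n es = mat n n (\<lambda>(i,j). if i = j then es ! i else 0)"

definition nrm :: "real vec \<Rightarrow> real vec" where "nrm w = (1 / sqrt (w \<bullet> w)) \<cdot>\<^sub>v w"

lemma nrm_carrier[simp]: "w \<in> carrier_vec n \<Longrightarrow> nrm w \<in> carrier_vec n"
  by (simp add: nrm_def)

lemma sq_pos: "(w :: real vec) \<in> carrier_vec n \<Longrightarrow> w \<noteq> 0\<^sub>v n \<Longrightarrow> w \<bullet> w > 0"
  using conjugate_square_greater_0_vec[of w n] by simp

lemma nrm_prod: "u \<in> carrier_vec n \<Longrightarrow> w \<in> carrier_vec n \<Longrightarrow>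
   nrm u \<bullet> nrm w = (u \<bullet> w) / (sqrt (u \<bullet> u) * sqrt (w \<bullet> w))"
  unfolding nrm_def
  by (subst smult_scalar_prod_distrib[of _ n], simp, simp,
      subst scalar_prod_smult_distrib[of _ n], auto)

lemma nrm_unit: "w \<in> carrier_vec n \<Longrightarrow> w \<noteq> 0\<^sub>v n \<Longrightarrow> nrm w \<bullet> nrm w = 1"
  using nrm_prod[of w n w] sq_pos[of w n] 
  by (simp add: real_sqrt_mult[symmetric])

lemma nrm_id: "w \<in> carrier_vec n \<Longrightarrow> w \<bullet> w = 1 \<Longrightarrow> nrm w = w"
  by (simp add: nrm_def)


lemma orthonormal_basis_hd:
  assumes u: "u \<in> carrier_vec n" and u1: "u \<bullet> u = (1::real)"
  shows "\<exists>ws. set ws \<subseteq> carrier_vec n \<and> length ws = n \<and> hd ws = u \<and>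
     (\<forall>i<n. \<forall>j<n. ws ! i \<bullet> ws ! j = (if i = j then 1 else 0))"
proof -
  have u0: "u \<noteq> 0\<^sub>v n" using u1 u by auto
  interpret cof_vec_space n "TYPE(real)" .
  define b where "b = basis_completion u"
  from basis_completion[OF u u0, folded b_def]
  have dist_b: "distinct b" 
    and indep: "\<not> lin_dep (set b)" and b: "set b \<subseteq> carrier_vec n" and hdb: "hd b = u" 
    and len_b: "length b = n" by auto
  have n: "n \<noteq> 0" using u0 u by (metis carrier_vecD eq_vecI less_nat_zero_code zero_carrier_vec) 
  from hdb len_b n obtain vs where bv: "b = u # vs" by (cases b, auto)
  define ws where "ws = gram_schmidt n b"
  from gram_schmidt_result[OF b dist_b indep refl, folded ws_def]
  have ws: "set ws \<subseteq> carrier_vec n" "corthogonal ws" "length ws = n" 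
    by (auto simp: len_b)
  from gram_schmidt_hd[OF u, of vs, folded bv] have hdws: "hd ws = u" unfolding ws_def .
  define ws' where "ws' = map nrm ws"
  have ws'c: "set ws' \<subseteq> carrier_vec n" using ws unfolding ws'_def by auto
  have len': "length ws' = n" using ws unfolding ws'_def by auto
  have "hd ws' = nrm u" unfolding ws'_def using hdws ws n by (cases ws, auto)
  with nrm_id[OF u u1] have hd': "hd ws' = u" by simp
  have nz: "ws ! i \<noteq> 0\<^sub>v n" if "i < n" for i
    using corthogonalD[OF ws(2), of i i] that ws by auto
  have "ws' ! i \<bullet> ws' ! j = (if i = j then 1 else 0)" if i: "i < n" and j: "j < n" for i j
  proof -
    have c: "ws ! i \<in> carrier_vec n" "ws ! j \<in> carrier_vec n" using ws i j by auto
    show ?thesis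
    proof (cases "i = j")
      case True thus ?thesis unfolding ws'_def using nrm_unit[OF c(1) nz[OF i]] i ws by auto
    next
      case False
      hence "ws ! i \<bullet> ws ! j = 0" using corthogonalD[OF ws(2), of i j] i j ws by auto
      thus ?thesis unfolding ws'_def using nrm_prod[OF c] i j ws False by auto
    qed
  qed
  thus ?thesis using ws'c len' hd' by blast
qed

lemma spectral:
  fixes A :: "real mat"
  assumes "A \<in> carrier_mat n n" "A\<^sup>T = A" "char_poly A = (\<Prod>e\<leftarrow>es. [:- e, 1:])"
  shows "\<exists>P \<in> carrier_mat n n. P\<^sup>T * P = 1\<^sub>m n \<and> P\<^sup>T * A * P = diag_of n es"
using assms
proof (induct es arbitrary: n A)
  case Nil
  from degree_monic_char_poly[OF Nil(1)] Nil(3) have "n = 0" by auto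
  show ?case
    by (rule bexI[of _ "1\<^sub>m n"], insert Nil(1) \<open>n=0\<close>, auto intro!: eq_matI simp: diag_of_def)
next
  case (Cons e es n A)
  note A = Cons(2) and sym = Cons(3)
  have cp: "char_poly A = [: -e, 1 :] * (\<Prod>e \<leftarrow> es. [:- e, 1:])" using Cons(4) by simp
  have mon: "monic (\<Prod>e\<leftarrow> es. [:- e, 1:])" by (rule monic_prod_list, auto)
  have deg: "degree (char_poly A) = Suc (degree (\<Prod>e\<leftarrow> es. [:- e, 1:]))" unfolding cp
    by (subst degree_mult_eq, insert mon, auto)
  with degree_monic_char_poly[OF A] have n: "n \<noteq> 0" by auto
  have ev: "eigenvalue A e" unfolding eigenvalue_root_char_poly[OF A] cp by simp
  define v where "v = find_eigenvector A e"
  from find_eigenvector[OF A ev] have "eigenvector A v e" unfolding v_def .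
  hence v: "v \<in> carrier_vec n" and v0: "v \<noteq> 0\<^sub>v n" and Av: "A *\<^sub>v v = e \<cdot>\<^sub>v v"
    unfolding eigenvector_def using A by auto
  define u where "u = nrm v"
  have u: "u \<in> carrier_vec n" and u1: "u \<bullet> u = 1" using nrm_unit[OF v v0] v unfolding u_def by auto
  have Au: "A *\<^sub>v u = e \<cdot>\<^sub>v u" unfolding u_def nrm_def
    using mult_mat_vec[OF A v] Av by (auto simp: smult_smult_assoc mult.commute)
  obtain ws where ws: "set ws \<subseteq> carrier_vec n" "length ws = n" "hd ws = u"
     and orth: "\<And>i j. i < n \<Longrightarrow> j < n \<Longrightarrow> ws ! i \<bullet> ws ! j = (if i = j then 1 else 0)"
    using orthonormal_basis_hd[OF u u1] by blast
  have ws0: "ws ! 0 = u" using ws n by (cases ws, auto)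
  define W where "W = mat_of_cols n ws"
  have W: "W \<in> carrier_mat n n" unfolding W_def using ws by auto
  have colW: "col W j = ws ! j" if "j < n" for j unfolding W_def using ws that 
    by (intro col_mat_of_cols, auto)
  have WtW: "W\<^sup>T * W = 1\<^sub>m n"
    by (rule eq_matI, insert W, auto simp: colW orth)
  have WWt: "W * W\<^sup>T = 1\<^sub>m n" using mat_mult_left_right_inverse[OF _ W WtW] W by auto
  define A' where "A' = W\<^sup>T * A * W"
  have A': "A' \<in> carrier_mat n n" unfolding A'_def using A W by auto
  have symA': "A'\<^sup>T = A'"
  proof -
    have "A'\<^sup>T = W\<^sup>T * (W\<^sup>T * A)\<^sup>T" unfolding A'_def
      by (rule transpose_mult[of _ n n], insert A W, auto)
    also have "(W\<^sup>T * A)\<^sup>T = A * W" 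
      by (subst transpose_mult[of _ n n], insert A W sym, auto)
    finally show ?thesis unfolding A'_def using A W by (simp add: assoc_mult_mat[of _ n n _ n _ n])
  qed
  have col0: "A' $$ (i, 0) = (if i = 0 then e else 0)" if i: "i < n" for i
  proof -
    have "A' $$ (i, 0) = (W\<^sup>T * (A * W)) $$ (i, 0)" unfolding A'_def using A W 
      by (simp add: assoc_mult_mat[of _ n n _ n _ n])
    also have "\<dots> = ws ! i \<bullet> (A *\<^sub>v u)" using i n W A
      by (subst index_mult_mat, auto simp: col_mult2[of _ n n _ n] colW ws0 mult_mat_vec_def)
    also have "\<dots> = e * (ws ! i \<bullet> ws ! 0)" unfolding Au ws0 
      using ws i u by (subst scalar_prod_smult_distrib[of _ n], auto)
    finally show ?thesis using orth[OF i, of 0] n by auto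
  qed
  have row0: "A' $$ (0, j) = (if j = 0 then e else 0)" if j: "j < n" for j
    using col0[OF j] arg_cong[OF symA', of "\<lambda>M. M $$ (j,0)"] A' j n by auto
  define A3 where "A3 = mat (n-1) (n-1) (\<lambda>(i,j). A' $$ (Suc i, Suc j))"
  have A3: "A3 \<in> carrier_mat (n-1) (n-1)" unfolding A3_def by auto
  have blk: "A' = four_block_mat (mat 1 1 (\<lambda>_. e)) (0\<^sub>m 1 (n-1)) (0\<^sub>m (n-1) 1) A3"
    by (rule eq_matI, insert A' n col0 row0, auto simp: A3_def)
  have cpA': "char_poly A' = char_poly A"
  proof (rule char_poly_similar)
    show "similar_mat A' A" unfolding similar_mat_def A'_def
      by (rule exI[of _ "W\<^sup>T"], rule exI[of _ W], rule similar_mat_witI[of _ _ n], insert W A WtW WWt, auto)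
  qed
  have "char_poly A' = char_poly (mat 1 1 (\<lambda>_. e)) * char_poly A3"
    unfolding blk by (rule char_poly_four_block_zeros_col, insert A3, auto)
  also have "char_poly (mat 1 1 (\<lambda>_. e)) = [: -e,1 :]"
    by (simp add: char_poly_defs det_def sign_def)
  finally have "[: -e,1 :] * char_poly A3 = [: -e,1 :] * (\<Prod>e \<leftarrow> es. [:- e, 1:])"
    using cpA' cp by simp
  hence cp3: "char_poly A3 = (\<Prod> e \<leftarrow> es. [:- e, 1:])"
    by (metis mult_cancel_left pCons_eq_0_iff zero_neq_one)
  have sym3: "A3\<^sup>T = A3"
  proof (rule eq_matI)
    fix i j assume i: "i < dim_row A3" and j: "j < dim_col A3"
    hence i': "Suc i < n" and j': "Suc j < n" using A3 by auto
    have "A3\<^sup>T $$ (i, j) = A' $$ (Suc j, Suc i)" using i j A3 by (auto simp: A3_def)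
    also have "\<dots> = A'\<^sup>T $$ (Suc i, Suc j)" using i' j' A' by auto
    also have "\<dots> = A3 $$ (i, j)" unfolding symA' using i j A3 by (auto simp: A3_def)
    finally show "A3\<^sup>T $$ (i, j) = A3 $$ (i, j)" .
  qed (insert A3, auto)
  from Cons(1)[OF A3 sym3 cp3] obtain P' where P': "P' \<in> carrier_mat (n-1) (n-1)"
    and P'P': "P'\<^sup>T * P' = 1\<^sub>m (n-1)" and P'A: "P'\<^sup>T * A3 * P' = diag_of (n-1) es" by blast
  define B where "B = four_block_mat (1\<^sub>m 1) (0\<^sub>m 1 (n-1)) (0\<^sub>m (n-1) 1) P'"
  have nn: "1 + (n - 1) = n" using n by simp
  have B: "B \<in> carrier_mat n n"
  proof -
    have "B \<in> carrier_mat (1 + (n-1)) (1 + (n-1))" unfolding B_def using P' by (intro four_block_carrier_mat) auto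
    thus ?thesis unfolding nn .
  qed
  have Bt: "B\<^sup>T = four_block_mat (1\<^sub>m 1) (0\<^sub>m 1 (n-1)) (0\<^sub>m (n-1) 1) P'\<^sup>T"
    unfolding B_def by (subst transpose_four_block_mat, insert P', auto)
  have "B\<^sup>T * B = 1\<^sub>m (1 + (n-1))"
    unfolding Bt unfolding B_def
    by (subst mult_four_block_mat[of _ 1 1 _ "n-1" _ "n-1" _ _ 1 _ "n-1"], insert P' P'P', auto)
  hence BtB: "B\<^sup>T * B = 1\<^sub>m n" unfolding nn .
  have BtAB: "B\<^sup>T * A' * B = diag_of n (e # es)"
  proof -
    have "B\<^sup>T * A' * B = four_block_mat (mat 1 1 (\<lambda>_. e)) (0\<^sub>m 1 (n-1)) (0\<^sub>m (n-1) 1) (P'\<^sup>T * A3 * P')"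
      unfolding Bt blk unfolding B_def
      apply (subst mult_four_block_mat[of _ 1 1 _ "n-1" _ "n-1" _ _ 1 _ "n-1"], insert P' A3, auto)
      apply (subst mult_four_block_mat[of _ 1 1 _ "n-1" _ "n-1" _ _ 1 _ "n-1"], insert P' A3, auto)
      done
    also have "\<dots> = diag_of n (e # es)" unfolding P'A
      by (rule eq_matI, insert n, auto simp: diag_of_def)
    finally show ?thesis .
  qed
  define P where "P = W * B"
  have P: "P \<in> carrier_mat n n" unfolding P_def using W B by auto
  have Pt: "P\<^sup>T = B\<^sup>T * W\<^sup>T" unfolding P_def by (rule transpose_mult[of _ n n], insert W B, auto)
  have Bt0: "B\<^sup>T \<in> carrier_mat n n" and Wt0: "W\<^sup>T \<in> carrier_mat n n" using B W by auto
  have "P\<^sup>T * P = B\<^sup>T * W\<^sup>T * (W * B)" unfolding Pt unfolding P_def ..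
  also have "\<dots> = B\<^sup>T * (W\<^sup>T * (W * B))" 
    by (rule assoc_mult_mat[of _ n n], insert W B Bt0 Wt0, auto)
  also have "\<dots> = B\<^sup>T * B"
    using assoc_mult_mat[of "W\<^sup>T" n n W n B n, symmetric] W B Wt0 WtW by auto
  finally have PtP: "P\<^sup>T * P = 1\<^sub>m n" using BtB by simp
  have Bt: "B\<^sup>T \<in> carrier_mat n n" and Wt: "W\<^sup>T \<in> carrier_mat n n" using B W by auto
  have "P\<^sup>T * A * P = B\<^sup>T * W\<^sup>T * A * (W * B)" unfolding Pt unfolding P_def ..
  also have "\<dots> = B\<^sup>T * W\<^sup>T * A * W * B"
    by (rule assoc_mult_mat[symmetric, of _ n n], insert A W B Bt Wt, auto)
  also have "B\<^sup>T * W\<^sup>T * A * W * B = B\<^sup>T * (W\<^sup>T * A) * W * B"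
    using assoc_mult_mat[of "B\<^sup>T" n n "W\<^sup>T" n A n] A Bt Wt by simp
  also have "\<dots> = B\<^sup>T * A' * B" unfolding A'_def
    using assoc_mult_mat[of "B\<^sup>T" n n "W\<^sup>T * A" n W n] A Bt Wt W by simp
  finally have PAP: "P\<^sup>T * A * P = B\<^sup>T * A' * B" .
  show ?case
  proof (rule bexI[of _ P])
    show "P\<^sup>T * P = 1\<^sub>m n \<and> P\<^sup>T * A * P = diag_of n (e # es)"
      using PAP BtAB PtP by simp
  qed (rule P)
qed


lemma (in vec_space) rank_mult_le:
  assumes A: "A \<in> carrier_mat n m" and B: "B \<in> carrier_mat m k"
  shows "rank (A * B) \<le> rank A"
proof -
  have AB: "A * B \<in> carrier_mat n k" using A B by auto
  have sub: "col_space (A * B) \<subseteq> col_space A"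
  proof
    fix y assume "y \<in> col_space (A * B)"
    then obtain x where x: "x \<in> carrier_vec k" and y: "y = (A * B) *\<^sub>v x" and yc: "y \<in> carrier_vec n"
      unfolding col_space_eq[OF AB] using AB by auto
    have "y = A *\<^sub>v (B *\<^sub>v x)" unfolding y using A B x by (simp add: assoc_mult_mat_vec)
    moreover have "B *\<^sub>v x \<in> carrier_vec m" using B x by auto
    ultimately show "y \<in> col_space A" unfolding col_space_eq[OF A] using A yc by auto
  qed
  have cA: "set (cols A) \<subseteq> carrier_vec n" using A cols_dim by blast
  have cAB: "set (cols (A * B)) \<subseteq> carrier_vec n" using AB cols_dim by blast
  have s1: "VectorSpace.subspace class_ring (col_space A) V" unfolding col_space_def using span_is_subspace[OF cA] by auto
  have s2: "VectorSpace.subspace class_ring (col_space (A * B)) V" unfolding col_space_def using span_is_subspace[OF cAB] by auto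
  have s3: "VectorSpace.subspace class_ring (col_space (A * B)) (vs (col_space A))"
    using nested_subspaces[OF s1 s2 sub] .
  have f1: "vectorspace.fin_dim class_ring (vs (col_space A))" unfolding col_space_def using fin_dim_span_cols[OF A] .
  have f2: "vectorspace.fin_dim class_ring (vs (col_space (A * B)))" unfolding col_space_def using fin_dim_span_cols[OF AB] .
  have "vectorspace.dim class_ring (vs (col_space (A * B))) \<le> vectorspace.dim class_ring (vs (col_space A))"
    using vectorspace.subspace_dim[OF subspace_is_vs[OF s1] s3 f1] f2 by auto
  thus ?thesis unfolding rank_def col_space_def by simp
qed

lemma (in vec_space) rank_orth_cols:
  assumes V: "U \<in> carrier_mat n k" and VV: "U\<^sup>T * U = 1\<^sub>m k"
  shows "rank U = k"
proof -
  have ent: "col U i \<bullet> col U j = (if i = j then 1 else 0)" if "i < k" "j < k" for i j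
    using arg_cong[OF VV, of "\<lambda>M. M $$ (i,j)"] that V by auto
  have dist: "distinct (cols U)"
  proof -
    { fix i j assume i: "i < k" and j: "j < k" and ij: "i \<noteq> j" and eq: "col U i = col U j"
      have "col U i \<bullet> col U j = 1" using ent[OF i i] eq by simp
      with ent[OF i j] ij have False by simp }
    thus ?thesis unfolding distinct_conv_nth using V by auto
  qed
  have "lin_indpt (set (cols U))"
  proof
    assume "lin_dep (set (cols U))"
    from lin_depE[OF V this dist] obtain v where v: "v \<in> carrier_vec k" "v \<noteq> 0\<^sub>v k" "U *\<^sub>v v = 0\<^sub>v n" .
    have "v = (U\<^sup>T * U) *\<^sub>v v" using VV v by simp
    also have "\<dots> = U\<^sup>T *\<^sub>v (U *\<^sub>v v)" using V v by (simp add: assoc_mult_mat_vec[of _ k n _ k])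
    also have "\<dots> = 0\<^sub>v k" using v V by (intro eq_vecI, auto)
    finally show False using v by simp
  qed
  thus ?thesis using lin_indpt_full_rank[OF V dist] by simp
qed


lemma map_poly_of_real_prod: "map_poly complex_of_real (\<Prod>e\<leftarrow>es. [:- e, 1:]) = (\<Prod>e\<leftarrow>es. [:- complex_of_real e, 1:])"
proof -
  interpret h: map_poly_inj_idom_hom complex_of_real ..
  show ?thesis
  proof (induct es)
    case (Cons a es)
    have "map_poly complex_of_real (\<Prod>e\<leftarrow>a # es. [:- e, 1:]) = 
      map_poly complex_of_real [:- a, 1:] * map_poly complex_of_real (\<Prod>e\<leftarrow>es. [:- e, 1:])"
      by (simp only: list.map prod_list.Cons h.hom_mult)
    also have "\<dots> = [:- complex_of_real a, 1:] * (\<Prod>e\<leftarrow>es. [:- complex_of_real e, 1:])"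
      unfolding Cons by simp
    finally show ?case by simp
  qed simp
qed

lemma map_poly_of_real_inj: "map_poly complex_of_real p = map_poly complex_of_real q \<Longrightarrow> p = q"
proof -
  interpret h: map_poly_inj_idom_hom complex_of_real ..
  show "map_poly complex_of_real p = map_poly complex_of_real q \<Longrightarrow> p = q" by (rule h.injectivity)
qed

lemma idem_char_poly_split:
  fixes Q :: "real mat"
  assumes Q: "Q \<in> carrier_mat N N" and QQ: "Q * Q = Q"
  shows "\<exists>es. char_poly Q = (\<Prod>e\<leftarrow>es. [:- e, 1:]) \<and> set es \<subseteq> {0,1}"
proof -
  let ?Qc = "of_real_hom.mat_hom Q :: complex mat"
  have Qc: "?Qc \<in> carrier_mat N N" using Q by auto
  have QQc: "?Qc * ?Qc = ?Qc" using of_real_hom.mat_hom_mult[OF Q Q] QQ by metis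
  from char_poly_factorized[OF Qc] obtain as where as: "char_poly ?Qc = (\<Prod>a\<leftarrow>as. [:- a, 1:])" by auto
  have as01: "a \<in> {0,1}" if a: "a \<in> set as" for a
  proof -
    have "poly (char_poly ?Qc) a = 0" unfolding as using a
      by (induct as, auto)
    hence "eigenvalue ?Qc a" using eigenvalue_root_char_poly[OF Qc] by simp
    then obtain v where v: "v \<in> carrier_vec N" "v \<noteq> 0\<^sub>v N" and Qv: "?Qc *\<^sub>v v = a \<cdot>\<^sub>v v"
      unfolding eigenvalue_def eigenvector_def using Qc by auto
    have "a \<cdot>\<^sub>v v = ?Qc *\<^sub>v v" using Qv by simp
    also have "\<dots> = (?Qc * ?Qc) *\<^sub>v v" using QQc by simp
    also have "\<dots> = ?Qc *\<^sub>v (?Qc *\<^sub>v v)" using Qc v by (simp add: assoc_mult_mat_vec[of _ N N _ N])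
    also have "\<dots> = (a * a) \<cdot>\<^sub>v v" unfolding Qv using Qc v Qv by (simp add: mult_mat_vec smult_smult_assoc)
    finally have eq: "a \<cdot>\<^sub>v v = (a * a) \<cdot>\<^sub>v v" .
    obtain i where i: "i < N" "v $ i \<noteq> 0" using v by (metis carrier_vecD eq_vecI index_zero_vec)
    from arg_cong[OF eq, of "\<lambda>w. w $ i"] i v have "a = a * a" by auto
    thus ?thesis by (metis insertCI mult_cancel_right1 mult_zero_left) 
  qed
  define es where "es = map Re as"
  have "map (complex_of_real \<circ> Re) as = as" using as01 by (intro map_idI) force
  hence "as = map complex_of_real es" unfolding es_def map_map by simp
  hence "map_poly complex_of_real (char_poly Q) = map_poly complex_of_real (\<Prod>e\<leftarrow>es. [:- e, 1:])"
    unfolding of_real_hom.char_poly_hom[OF Q, symmetric] as map_poly_of_real_prod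
    by (simp add: comp_def)
  hence "char_poly Q = (\<Prod>e\<leftarrow>es. [:- e, 1:])" by (rule map_poly_of_real_inj)
  moreover have "set es \<subseteq> {0,1}" unfolding es_def using as01 by force
  ultimately show ?thesis by blast
qed



lemma mult_diag_right: assumes P: "P \<in> carrier_mat n n" and i: "i < n" and k: "k < n"
  shows "(P * diag_of n es) $$ (i,k) = P $$ (i,k) * es ! k"
proof -
  have "(P * diag_of n es) $$ (i,k) = (\<Sum>m\<in>{0..<n}. P $$ (i,m) * (if m = k then es ! m else 0))"
    using P i k by (simp add: diag_of_def scalar_prod_def)
  also have "\<dots> = (\<Sum>m\<in>{0..<n}. (if m = k then P $$ (i,k) * es ! k else 0))"
    by (rule sum.cong, auto)
  also have "\<dots> = P $$ (i,k) * es ! k" using k by simp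
  finally show ?thesis .
qed

lemma spectral_rep:
  fixes Q P :: "real mat"
  assumes Q: "Q \<in> carrier_mat N N" and P: "P \<in> carrier_mat N N" and PtP: "P\<^sup>T * P = 1\<^sub>m N"
    and PQP: "P\<^sup>T * Q * P = diag_of N es"
  shows "Q = P * diag_of N es * P\<^sup>T" and "P * P\<^sup>T = 1\<^sub>m N"
    and "Q * P = P * diag_of N es"
    and "\<And>i j. i < N \<Longrightarrow> j < N \<Longrightarrow> Q $$ (i,j) = (\<Sum>k<N. P $$ (i,k) * es ! k * P $$ (j,k))"
proof -
  have Pt: "P\<^sup>T \<in> carrier_mat N N" using P by auto
  show PPt: "P * P\<^sup>T = 1\<^sub>m N" using mat_mult_left_right_inverse[OF Pt P PtP] .
  have "P * diag_of N es * P\<^sup>T = P * (P\<^sup>T * Q * P) * P\<^sup>T" unfolding PQP ..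
  also have "\<dots> = (P * P\<^sup>T) * Q * (P * P\<^sup>T)"
    using P Pt Q by (simp add: assoc_mult_mat[of _ N N _ N _ N])
  also have "\<dots> = Q" unfolding PPt using Q by simp
  finally show Qr: "Q = P * diag_of N es * P\<^sup>T" ..
  have D: "diag_of N es \<in> carrier_mat N N" by (simp add: diag_of_def)
  have "Q * P = P * diag_of N es * (P\<^sup>T * P)" unfolding Qr
    using P Pt D by (simp add: assoc_mult_mat[of _ N N _ N _ N])
  thus "Q * P = P * diag_of N es" unfolding PtP using P D by simp
  fix i j assume i: "i < N" and j: "j < N"
  have "Q $$ (i,j) = row (P * diag_of N es) i \<bullet> col P\<^sup>T j"
    unfolding Qr by (rule index_mult_mat, insert P i j, auto)
  also have "\<dots> = (\<Sum>k\<in>{0..<N}. (P * diag_of N es) $$ (i,k) * P $$ (j,k))"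
    unfolding scalar_prod_def using P D i j by auto
  also have "\<dots> = (\<Sum>k<N. P $$ (i,k) * es ! k * P $$ (j,k))"
    by (rule sum.cong, auto simp: mult_diag_right[OF P i])
  finally show "Q $$ (i,j) = (\<Sum>k<N. P $$ (i,k) * es ! k * P $$ (j,k))" .
qed


lemma orth_cols_sum: assumes P: "P \<in> carrier_mat N N" and PtP: "P\<^sup>T * P = 1\<^sub>m N"
  and k: "k < N" and k': "k' < N"
  shows "(\<Sum>i<N. P $$ (i,k) * P $$ (i,k')) = (if k = k' then 1 else (0::real))"
proof -
  have "(P\<^sup>T * P) $$ (k,k') = (\<Sum>i\<in>{0..<N}. P $$ (i,k) * P $$ (i,k'))"
    using P k k' by (simp add: scalar_prod_def)
  thus ?thesis unfolding PtP using k k' by (simp add: lessThan_atLeast0)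
qed

lemma count_le_rank:
  fixes Q P :: "real mat"
  assumes Q: "Q \<in> carrier_mat N N" and P: "P \<in> carrier_mat N N" and PtP: "P\<^sup>T * P = 1\<^sub>m N"
    and PQP: "P\<^sup>T * Q * P = diag_of N es" and es01: "set es \<subseteq> {0,1}" and len: "length es = N"
  shows "(\<Sum>k<N. es ! k) \<le> real (vec_space.rank N Q)"
proof -
  define ks where "ks = filter (\<lambda>k. es ! k = 1) [0..<N]"
  define a where "a = length ks"
  have ksN: "ks ! j < N" if "j < a" for j using that unfolding a_def ks_def
    by (metis (no_types, lifting) atLeastLessThan_iff mem_Collect_eq nth_mem set_filter set_upt)
  have kses: "es ! (ks ! j) = 1" if "j < a" for j using that unfolding a_def ks_def
    by (metis (mono_tags, lifting) mem_Collect_eq nth_mem set_filter)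
  have dks: "distinct ks" unfolding ks_def by simp
  have sum_a: "(\<Sum>k<N. es ! k) = real a"
  proof -
    have "(\<Sum>k<N. es ! k) = (\<Sum>k<N. if es ! k = 1 then 1 else 0)"
    proof (rule sum.cong)
      fix k assume "k \<in> {..<N}"
      hence "es ! k \<in> set es" using len by auto
      hence "es ! k \<in> {0,1}" using es01 by blast
      thus "es ! k = (if es ! k = 1 then 1 else 0)" by auto
    qed simp
    also have "\<dots> = real (card {k \<in> {..<N}. es ! k = 1})"
      by (simp add: sum.If_cases Int_def)
    also have "{k \<in> {..<N}. es ! k = 1} = set ks" unfolding ks_def by auto
    also have "card (set ks) = a" unfolding a_def using distinct_card[OF dks] .
    finally show ?thesis .
  qed
  define V where "V = mat N a (\<lambda>(i,j). P $$ (i, ks ! j))"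
  have V: "V \<in> carrier_mat N a" unfolding V_def by simp
  have VtV: "V\<^sup>T * V = 1\<^sub>m a"
  proof (rule eq_matI)
    fix j j' assume j: "j < dim_row (1\<^sub>m a)" and j': "j' < dim_col (1\<^sub>m a)"
    hence j: "j < a" and j': "j' < a" by auto
    have "(V\<^sup>T * V) $$ (j,j') = (\<Sum>i\<in>{0..<N}. P $$ (i, ks ! j) * P $$ (i, ks ! j'))"
      using V j j' by (simp add: scalar_prod_def V_def)
    also have "\<dots> = (if ks ! j = ks ! j' then 1 else 0)"
      using orth_cols_sum[OF P PtP ksN[OF j] ksN[OF j']] by (simp add: lessThan_atLeast0)
    also have "\<dots> = 1\<^sub>m a $$ (j,j')" using j j' nth_eq_iff_index_eq[OF dks, of j j'] unfolding a_def by auto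
    finally show "(V\<^sup>T * V) $$ (j,j') = 1\<^sub>m a $$ (j,j')" .
  qed (insert V, auto)
  note rep = spectral_rep[OF Q P PtP PQP]
  have QV: "Q * V = V"
  proof (rule eq_matI)
    fix i j assume i: "i < dim_row V" and j: "j < dim_col V"
    hence i: "i < N" and j: "j < a" using V by auto
    have "(Q * V) $$ (i,j) = (\<Sum>l\<in>{0..<N}. Q $$ (i,l) * P $$ (l, ks ! j))"
      using Q V i j by (simp add: scalar_prod_def V_def)
    also have "\<dots> = (Q * P) $$ (i, ks ! j)"
      using Q P i ksN[OF j] by (simp add: scalar_prod_def)
    also have "\<dots> = P $$ (i, ks ! j)" unfolding rep(3) mult_diag_right[OF P i ksN[OF j]] kses[OF j] by simp
    also have "\<dots> = V $$ (i,j)" using i j by (simp add: V_def)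
    finally show "(Q * V) $$ (i,j) = V $$ (i,j)" .
  qed (insert Q V, auto)
  interpret vs: vec_space "TYPE(real)" N .
  have "a = vs.rank V" using vs.rank_orth_cols[OF V VtV] by simp
  also have "\<dots> = vs.rank (Q * V)" unfolding QV ..
  also have "\<dots> \<le> vs.rank Q" by (rule vs.rank_mult_le[OF Q V])
  finally show ?thesis unfolding sum_a by simp
qed


lemma amgm_term: assumes "0 \<le> (e::real)" shows "\<bar>x * e * y\<bar> \<le> e * (x\<^sup>2 + y\<^sup>2) / 2"
proof -
  have "0 \<le> (\<bar>x\<bar> - \<bar>y\<bar>)\<^sup>2" by simp
  hence "2 * (\<bar>x\<bar> * \<bar>y\<bar>) \<le> x\<^sup>2 + y\<^sup>2" by (simp add: power2_eq_square algebra_simps)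
  hence "e * (2 * (\<bar>x\<bar> * \<bar>y\<bar>)) \<le> e * (x\<^sup>2 + y\<^sup>2)" using assms by (rule mult_left_mono)
  moreover have "\<bar>x * e * y\<bar> = e * (\<bar>x\<bar> * \<bar>y\<bar>)" using assms by (simp add: abs_mult)
  ultimately show ?thesis by simp
qed

lemma double_sum_avg: "(\<Sum>i<N. \<Sum>j<N. (e::real) * ((a i) + (a j)) / 2) = e * real N * (\<Sum>i<N. a i)"
proof -
  have "(\<Sum>i<N. \<Sum>j<N. e * ((a i) + (a j)) / 2) = (\<Sum>i<N. \<Sum>j<N. e / 2 * a i + e / 2 * a j)"
    by (simp add: algebra_simps add_divide_distrib)
  also have "\<dots> = (\<Sum>i<N. (\<Sum>j<N. e / 2 * a i) + (\<Sum>j<N. e / 2 * a j))"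
    by (simp only: sum.distrib)
  also have "\<dots> = (\<Sum>i<N. real N * (e / 2 * a i)) + (\<Sum>i<N. (\<Sum>j<N. e / 2 * a j))"
    by (simp only: sum.distrib sum_constant card_lessThan)
  also have "\<dots> = e * real N * (\<Sum>i<N. a i)"
    by (simp only: sum_distrib_left[symmetric] sum_constant card_lessThan, simp add: algebra_simps)
  finally show ?thesis .
qed

lemma proj_bound:
  fixes Q :: "real mat"
  assumes Q: "Q \<in> carrier_mat N N" and QQ: "Q * Q = Q" and sym: "Q\<^sup>T = Q"
  shows "(\<Sum>i<N. \<Sum>j<N. \<bar>Q $$ (i,j)\<bar>) \<le> real (vec_space.rank N Q) * real N"
proof -
  obtain es where cp: "char_poly Q = (\<Prod>e\<leftarrow>es. [:- e, 1:])" and es01: "set es \<subseteq> {0,1}"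
    using idem_char_poly_split[OF Q QQ] by blast
  have len: "length es = N"
    using degree_monic_char_poly[OF Q] degree_linear_factors[of uminus es] cp by auto
  obtain P where P: "P \<in> carrier_mat N N" and PtP: "P\<^sup>T * P = 1\<^sub>m N" and PQP: "P\<^sup>T * Q * P = diag_of N es"
    using spectral[OF Q sym cp] by blast
  note rep = spectral_rep[OF Q P PtP PQP]
  have e0: "0 \<le> es ! k" if "k < N" for k
  proof -
    have "es ! k \<in> set es" using that len by auto
    thus ?thesis using es01 by auto
  qed
  have bnd: "\<bar>Q $$ (i,j)\<bar> \<le> (\<Sum>k<N. es ! k * ((P $$ (i,k))\<^sup>2 + (P $$ (j,k))\<^sup>2) / 2)"
    if i: "i < N" and j: "j < N" for i j
  proof -
    have "\<bar>Q $$ (i,j)\<bar> = \<bar>\<Sum>k<N. P $$ (i,k) * es ! k * P $$ (j,k)\<bar>" using rep(4)[OF i j] by simp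
    also have "\<dots> \<le> (\<Sum>k<N. \<bar>P $$ (i,k) * es ! k * P $$ (j,k)\<bar>)" by (rule sum_abs)
    also have "\<dots> \<le> (\<Sum>k<N. es ! k * ((P $$ (i,k))\<^sup>2 + (P $$ (j,k))\<^sup>2) / 2)"
      by (rule sum_mono, rule amgm_term, rule e0, auto)
    finally show ?thesis .
  qed
  have "(\<Sum>i<N. \<Sum>j<N. \<bar>Q $$ (i,j)\<bar>) \<le> (\<Sum>i<N. \<Sum>j<N. \<Sum>k<N. es ! k * ((P $$ (i,k))\<^sup>2 + (P $$ (j,k))\<^sup>2) / 2)"
    by (intro sum_mono bnd, auto)
  also have "\<dots> = (\<Sum>i<N. \<Sum>k<N. \<Sum>j<N. es ! k * ((P $$ (i,k))\<^sup>2 + (P $$ (j,k))\<^sup>2) / 2)"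
    by (rule sum.cong[OF refl], rule sum.swap)
  also have "\<dots> = (\<Sum>k<N. \<Sum>i<N. \<Sum>j<N. es ! k * ((P $$ (i,k))\<^sup>2 + (P $$ (j,k))\<^sup>2) / 2)"
    by (rule sum.swap)
  also have "\<dots> = (\<Sum>k<N. es ! k * real N * (\<Sum>i<N. (P $$ (i,k))\<^sup>2))"
    by (rule sum.cong[OF refl], rule double_sum_avg)
  also have "\<dots> = (\<Sum>k<N. es ! k * real N)"
  proof (rule sum.cong[OF refl])
    fix k assume "k \<in> {..<N}"
    hence "(\<Sum>i<N. (P $$ (i,k))\<^sup>2) = 1" using orth_cols_sum[OF P PtP, of k k] by (simp add: power2_eq_square)
    thus "es ! k * real N * (\<Sum>i<N. (P $$ (i,k))\<^sup>2) = es ! k * real N" by simp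
  qed
  also have "\<dots> = (\<Sum>k<N. es ! k) * real N" by (simp add: sum_distrib_right)
  also have "\<dots> \<le> real (vec_space.rank N Q) * real N"
    by (rule mult_right_mono, rule count_le_rank[OF Q P PtP PQP es01 len], simp)
  finally show ?thesis .
qed

lemma beta_N_le: assumes N: "N > 0" shows "beta_N r N \<le> real r + \<bar>Sup ({}::real set)\<bar>"
proof (cases "proj_set r N = {}")
  case True
  have "beta_N r N = (1 / real N) * Sup ({}::real set)" unfolding beta_N_def True by simp
  also have "\<dots> \<le> \<bar>Sup ({}::real set)\<bar>"
  proof -
    have "(1 / real N) * Sup ({}::real set) \<le> (1 / real N) * \<bar>Sup ({}::real set)\<bar>"
      using N by (intro mult_left_mono, auto)
    also have "\<dots> \<le> 1 * \<bar>Sup ({}::real set)\<bar>" using N by (intro mult_right_mono, auto)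
    finally show ?thesis by simp
  qed
  finally show ?thesis by simp
next
  case False
  let ?S = "(\<lambda>Q. \<Sum>i<N. \<Sum>j<N. \<bar>Q $$ (i, j)\<bar>) ` proj_set r N"
  have "Sup ?S \<le> real r * real N"
  proof (rule cSup_least)
    show "?S \<noteq> {}" using False by simp
    fix x assume "x \<in> ?S"
    then obtain Q where Q: "Q \<in> proj_set r N" and x: "x = (\<Sum>i<N. \<Sum>j<N. \<bar>Q $$ (i, j)\<bar>)" by auto
    from Q have "Q \<in> carrier_mat N N" "Q * Q = Q" "Q\<^sup>T = Q" "vec_space.rank N Q = r"
      unfolding proj_set_def by auto
    with proj_bound[of Q N] show "x \<le> real r * real N" unfolding x by simp
  qed
  hence "beta_N r N \<le> (1 / real N) * (real r * real N)" unfolding beta_N_def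
    using N by (intro mult_left_mono, auto)
  also have "\<dots> = real r" using N by simp
  finally show ?thesis by simp
qed

lemma beta_N_le_beta: assumes "N \<ge> r" "r \<ge> 1" shows "beta_N r N \<le> beta r"
  unfolding beta_def
proof (rule cSup_upper)
  show "beta_N r N \<in> beta_N r ` {N. N \<ge> r}" using assms by auto
  show "bdd_above (beta_N r ` {N. N \<ge> r})"
    by (rule bdd_aboveI[of _ "real r + \<bar>Sup ({}::real set)\<bar>"], insert assms beta_N_le, auto)
qed

lemma in_proj_le_beta: assumes Q: "Q \<in> proj_set r N" and N: "N \<ge> r" and r: "r \<ge> 1"
  shows "(\<Sum>i<N. \<Sum>j<N. \<bar>Q $$ (i, j)\<bar>) \<le> real N * beta r"
proof -
  let ?S = "(\<lambda>Q. \<Sum>i<N. \<Sum>j<N. \<bar>Q $$ (i, j)\<bar>) ` proj_set r N"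
  have Np: "N > 0" using N r by auto
  have "(\<Sum>i<N. \<Sum>j<N. \<bar>Q $$ (i, j)\<bar>) \<le> Sup ?S"
  proof (rule cSup_upper)
    show "(\<Sum>i<N. \<Sum>j<N. \<bar>Q $$ (i, j)\<bar>) \<in> ?S" using Q by auto
    show "bdd_above ?S"
    proof (rule bdd_aboveI[of _ "real r * real N"])
      fix x assume "x \<in> ?S"
      then obtain Q where Q: "Q \<in> proj_set r N" and x: "x = (\<Sum>i<N. \<Sum>j<N. \<bar>Q $$ (i, j)\<bar>)" by auto
      from Q have "Q \<in> carrier_mat N N" "Q * Q = Q" "Q\<^sup>T = Q" "vec_space.rank N Q = r"
        unfolding proj_set_def by auto
      with proj_bound[of Q N] show "x \<le> real r * real N" unfolding x by simp
    qed
  qed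
  also have "\<dots> = real N * beta_N r N" unfolding beta_N_def using Np by simp
  also have "\<dots> \<le> real N * beta r" using beta_N_le_beta[OF N r] by (intro mult_left_mono, auto)
  finally show ?thesis .
qed


theorem theorem2p1:
  fixes r n :: nat and A :: "real mat" and lam :: "real list"
  assumes "r \<ge> 1" and "n \<ge> r"
    and "A \<in> carrier_mat n n" and "transpose_mat A = A"
    and "\<And>i j. i < n \<Longrightarrow> j < n \<Longrightarrow> i \<noteq> j \<Longrightarrow> 0 \<le> A $$ (i, j) \<and> A $$ (i, j) \<le> 1"
    and "\<And>i. i < n \<Longrightarrow> A $$ (i, i) \<ge> 0"
    and "length lam = n" and "sorted_wrt (\<ge>) lam"
    and "char_poly A = (\<Prod>a\<leftarrow>lam. [:- a, 1:])"
  shows "sum_list (drop (n - r) lam) \<ge> - (beta r / 2) * real n"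
proof -
  note r1 = assms(1) and rn = assms(2) and A = assms(3) and sym = assms(4)
    and offd = assms(5) and diag = assms(6) and len = assms(7) and cp = assms(9)
  obtain P where P: "P \<in> carrier_mat n n" and PtP: "P\<^sup>T * P = 1\<^sub>m n" and PAP: "P\<^sup>T * A * P = diag_of n lam"
    using spectral[OF A sym cp] by blast
  define m where "m = n - r"
  have mr: "m + r = n" unfolding m_def using rn by simp
  define V where "V = mat n r (\<lambda>(i,j). P $$ (i, m + j))"
  have V: "V \<in> carrier_mat n r" unfolding V_def by simp
  have Vt: "V\<^sup>T \<in> carrier_mat r n" using V by simp
  have VtV: "V\<^sup>T * V = 1\<^sub>m r"
  proof (rule eq_matI)
    fix j j' assume j: "j < dim_row (1\<^sub>m r)" and j': "j' < dim_col (1\<^sub>m r)"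
    hence j: "j < r" and j': "j' < r" by auto
    have "(V\<^sup>T * V) $$ (j,j') = (\<Sum>i\<in>{0..<n}. P $$ (i, m + j) * P $$ (i, m + j'))"
      using V j j' by (simp add: scalar_prod_def V_def)
    also have "\<dots> = (if m + j = m + j' then 1 else 0)"
      using orth_cols_sum[OF P PtP, of "m + j" "m + j'"] j j' mr by (simp add: lessThan_atLeast0)
    also have "\<dots> = 1\<^sub>m r $$ (j,j')" using j j' by auto
    finally show "(V\<^sup>T * V) $$ (j,j') = 1\<^sub>m r $$ (j,j')" .
  qed (insert V, auto)
  define Q where "Q = V * V\<^sup>T"
  have Q: "Q \<in> carrier_mat n n" unfolding Q_def using V by auto
  have symQ: "Q\<^sup>T = Q" unfolding Q_def using V by (simp add: transpose_mult[of _ n r])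
  have QV: "Q * V = V" unfolding Q_def
    using V Vt VtV by (simp add: assoc_mult_mat[of _ n r _ n _ r])
  have QQ: "Q * Q = Q"
  proof -
    have "Q * Q = V * (V\<^sup>T * (V * V\<^sup>T))" unfolding Q_def
      by (rule assoc_mult_mat[of _ n r _ n _ n], insert V Vt, auto)
    also have "V\<^sup>T * (V * V\<^sup>T) = (V\<^sup>T * V) * V\<^sup>T"
      by (rule assoc_mult_mat[symmetric, of _ r n _ r _ n], insert V Vt, auto)
    also have "\<dots> = V\<^sup>T" unfolding VtV using Vt by simp
    finally show ?thesis unfolding Q_def .
  qed
  interpret vs: vec_space "TYPE(real)" n .
  have rkV: "vs.rank V = r" by (rule vs.rank_orth_cols[OF V VtV])
  have "vs.rank Q \<le> r" unfolding Q_def using vs.rank_mult_le[OF V Vt] rkV by simp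
  moreover have "r \<le> vs.rank Q" using vs.rank_mult_le[OF Q V] unfolding QV rkV .
  ultimately have rkQ: "vs.rank Q = r" by simp
  have Qproj: "Q \<in> proj_set r n" unfolding proj_set_def using Q QQ symQ rkQ by auto
  have Qent: "Q $$ (i,j) = (\<Sum>l<r. P $$ (i, m + l) * P $$ (j, m + l))" if "i < n" "j < n" for i j
    unfolding Q_def using V that by (simp add: scalar_prod_def V_def lessThan_atLeast0)
  have lamk: "lam ! k = (\<Sum>i<n. \<Sum>j<n. P $$ (i,k) * A $$ (i,j) * P $$ (j,k))" if k: "k < n" for k
  proof -
    have "lam ! k = (P\<^sup>T * A * P) $$ (k,k)" unfolding PAP diag_of_def using k by simp
    also have "\<dots> = (P\<^sup>T * (A * P)) $$ (k,k)" using P A by (simp add: assoc_mult_mat[of _ n n _ n _ n])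
    also have "\<dots> = (\<Sum>i\<in>{0..<n}. P $$ (i,k) * (\<Sum>j\<in>{0..<n}. A $$ (i,j) * P $$ (j,k)))"
      using P A k by (simp add: scalar_prod_def)
    also have "\<dots> = (\<Sum>i<n. \<Sum>j<n. P $$ (i,k) * A $$ (i,j) * P $$ (j,k))"
      by (simp add: sum_distrib_left lessThan_atLeast0 mult.assoc)
    finally show ?thesis .
  qed
  have sumdrop: "sum_list (drop m lam) = (\<Sum>l<r. lam ! (m + l))"
  proof -
    have "n - m = r" using mr by simp
    thus ?thesis using len by (simp add: sum_list_sum_nth lessThan_atLeast0)
  qed
  have main_eq: "(\<Sum>l<r. lam ! (m + l)) = (\<Sum>i<n. \<Sum>j<n. A $$ (i,j) * Q $$ (i,j))"
  proof -
    have "(\<Sum>l<r. lam ! (m + l)) = (\<Sum>l<r. \<Sum>i<n. \<Sum>j<n. P $$ (i,m+l) * A $$ (i,j) * P $$ (j,m+l))"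
      by (rule sum.cong[OF refl], rule lamk, insert mr, auto)
    also have "\<dots> = (\<Sum>i<n. \<Sum>l<r. \<Sum>j<n. P $$ (i,m+l) * A $$ (i,j) * P $$ (j,m+l))"
      by (rule sum.swap)
    also have "\<dots> = (\<Sum>i<n. \<Sum>j<n. \<Sum>l<r. P $$ (i,m+l) * A $$ (i,j) * P $$ (j,m+l))"
      by (rule sum.cong[OF refl], rule sum.swap)
    also have "\<dots> = (\<Sum>i<n. \<Sum>j<n. A $$ (i,j) * Q $$ (i,j))"
      by (rule sum.cong[OF refl], rule sum.cong[OF refl], auto simp: Qent sum_distrib_left algebra_simps)
    finally show ?thesis .
  qed
  have termwise: "A $$ (i,j) * Q $$ (i,j) \<ge> (Q $$ (i,j) - \<bar>Q $$ (i,j)\<bar>) / 2" if i: "i < n" and j: "j < n" for i j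
  proof (cases "i = j")
    case True
    have "Q $$ (i,j) = (\<Sum>l<r. P $$ (i,m+l) * P $$ (i,m+l))" using Qent[OF i j] True by simp
    hence "Q $$ (i,j) \<ge> 0" by (simp add: sum_nonneg)
    moreover have "A $$ (i,j) \<ge> 0" using diag[OF i] True by simp
    ultimately show ?thesis by simp
  next
    case False
    from offd[OF i j False] have a0: "0 \<le> A $$ (i,j)" and a1: "A $$ (i,j) \<le> 1" by auto
    show ?thesis
    proof (cases "Q $$ (i,j) \<ge> 0")
      case True thus ?thesis using a0 by simp
    next
      case False
      have "0 \<le> (A $$ (i,j) - 1) * Q $$ (i,j)" using a1 False by (intro mult_nonpos_nonpos, auto)
      thus ?thesis using False by (simp add: algebra_simps)
    qed
  qed
  have sumQ: "(\<Sum>i<n. \<Sum>j<n. Q $$ (i,j)) \<ge> 0"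
  proof -
    have "(\<Sum>i<n. \<Sum>j<n. Q $$ (i,j)) = (\<Sum>i<n. \<Sum>j<n. \<Sum>l<r. P $$ (i, m + l) * P $$ (j, m + l))"
      by (rule sum.cong[OF refl], rule sum.cong[OF refl], rule Qent, auto)
    also have "\<dots> = (\<Sum>i<n. \<Sum>l<r. \<Sum>j<n. P $$ (i, m + l) * P $$ (j, m + l))"
      by (rule sum.cong[OF refl], rule sum.swap)
    also have "\<dots> = (\<Sum>l<r. \<Sum>i<n. \<Sum>j<n. P $$ (i, m + l) * P $$ (j, m + l))"
      by (rule sum.swap)
    also have "\<dots> = (\<Sum>l<r. (\<Sum>i<n. P $$ (i, m + l)) * (\<Sum>j<n. P $$ (j, m + l)))"
      by (simp add: sum_product)
    also have "\<dots> \<ge> 0" by (rule sum_nonneg, auto)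
    finally show ?thesis .
  qed
  have "- (real n * beta r) / 2 \<le> - (\<Sum>i<n. \<Sum>j<n. \<bar>Q $$ (i,j)\<bar>) / 2"
    using in_proj_le_beta[OF Qproj rn r1] by simp
  also have "\<dots> \<le> ((\<Sum>i<n. \<Sum>j<n. Q $$ (i,j)) - (\<Sum>i<n. \<Sum>j<n. \<bar>Q $$ (i,j)\<bar>)) / 2"
    using sumQ by simp
  also have "\<dots> = (\<Sum>i<n. \<Sum>j<n. (Q $$ (i,j) - \<bar>Q $$ (i,j)\<bar>) / 2)"
    by (simp only: sum_divide_distrib[symmetric] sum_subtractf)
  also have "\<dots> \<le> (\<Sum>i<n. \<Sum>j<n. A $$ (i,j) * Q $$ (i,j))"
    by (intro sum_mono termwise, auto)
  also have "\<dots> = sum_list (drop (n - r) lam)"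
    using sumdrop main_eq unfolding m_def by simp
  finally show ?thesis by (simp add: algebra_simps)
qed


end
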